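(* In the setting below (disjoint parameter spaces), let $\widehat\Xi_n=\sum_{m\in\mathcal{M}_n}\widehat\gamma_{n,m}\widehat\Xi_{n,m}$ with $\widehat\Xi_{n,m}\in\operatorname{argmin}_{\Xi\in\mathbb{V}_{n,m}}\mathcal{E}(\Xi,\Pi_{n,m},q_n,Y^{(n)})$ and $\widehat\gamma_{n,m}\propto\alpha_{n,m}\exp(-\mathcal{E}(\widehat\Xi_{n,m},\Pi_{n,m},q_n,Y^{(n)}))$ normalized to sum to one, and let $\widehat\alpha_{n,m}:=\Pi_n(\theta\in\Theta_{n,m}\mid Y^{(n)})$. Then $$\Big(\sum_{m\in\mathcal{M}_n}|\widehat\gamma_{n,m}-\widehat\alpha_{n,m}|\Big)^2\le 2\,\mathrm{KL}\big(\widehat\Xi_n,\Pi_n(\cdot\mid Y^{(n)})\big).$$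
   Context: Setting: $\mathfrak{Y}_n$ is a measurable space with $\sigma$-finite measure $\mu_n$; $q_n:\Lambda_n\times\mathfrak{Y}_n\to[0,\infty)$ is a likelihood ($\int q_n(\lambda,\cdot)d\mu_n=1$); $\mathcal{M}_n$ is countable; $\{\Theta_{n,m}\}_{m\in\mathcal{M}_n}$ are pairwise disjoint; $T_n:\bigcup_m\Theta_{n,m}\to\Lambda_n$ is measurable; prior $\Pi_n=\sum_m\alpha_{n,m}\Pi_{n,m}$ with $(\alpha_{n,m})$ a probability vector and $\Pi_{n,m}$ a probability measure on $\Theta_{n,m}$; $\mathbb{V}_{n,m}$ are sets of probability measures on $\Theta_{n,m}$. Posterior: $\Pi_n(\mathcal{T}\mid Y^{(n)})\propto\int_{\mathcal{T}}q_n(T_n(\theta),Y^{(n)})d\Pi_n(\theta)$. Objective: $\mathcal{E}(\Xi,\Pi,q_n,Y^{(n)})=-\int\log q_n(T_n(\theta),Y^{(n)})d\Xi(\theta)+\mathrm{KL}(\Xi,\Pi)$. *)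

theory Defs
  imports "HOL-Probability.Probability"
begin

text \<open>Kullback-Leibler divergence KL(P,Q) = integral of log(dP/dQ) dP if P is absolutely
  continuous w.r.t. Q, and infinity otherwise. dP/dQ is RN_deriv Q P. Where the density
  vanishes the log is minus infinity (only on a P-null set).\<close>
definition KL :: "'a measure \<Rightarrow> 'a measure \<Rightarrow> ereal" where
  "KL P Q =
    (if sets P = sets Q \<and> absolutely_continuous Q P then
       (let f = RN_deriv Q P in
          enn2ereal (\<integral>\<^sup>+ x. ennreal (max 0 (ln (enn2real (f x)))) \<partial>P)
        - enn2ereal (\<integral>\<^sup>+ x. (if f x = 0 then \<infinity> else ennreal (max 0 (- ln (enn2real (f x))))) \<partial>P))
     else \<infinity>)"

definition mixture :: "'t measure \<Rightarrow> 'm set \<Rightarrow> ('m \<Rightarrow> real) \<Rightarrow> ('m \<Rightarrow> 't measure) \<Rightarrow> 't measure" where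
  "mixture Th M w P =
     measure_of (space Th) (sets Th) (\<lambda>A. \<integral>\<^sup>+ m. ennreal (w m) * emeasure (P m) A \<partial>count_space M)"

definition posterior :: "'t measure \<Rightarrow> ('t \<Rightarrow> 'l) \<Rightarrow> ('l \<Rightarrow> 'y \<Rightarrow> real) \<Rightarrow> 'y \<Rightarrow> 't measure" where
  "posterior Pr T q y =
     density Pr (\<lambda>\<theta>. ennreal (q (T \<theta>) y) / (\<integral>\<^sup>+ t. ennreal (q (T t) y) \<partial>Pr))"

text \<open>Variational objective
  E(Xi, Pi, q, Y) = - integral log q(T theta, Y) dXi(theta) + KL(Xi, Pi),
  with log 0 = minus infinity; the integral is taken in the extended sense
  (positive part minus negative part).\<close>
definition vb_obj :: "'t measure \<Rightarrow> 't measure \<Rightarrow> ('t \<Rightarrow> 'l) \<Rightarrow> ('l \<Rightarrow> 'y \<Rightarrow> real) \<Rightarrow> 'y \<Rightarrow> ereal" where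
  "vb_obj Xi Pr T q y =
     - (enn2ereal (\<integral>\<^sup>+ \<theta>. ennreal (max 0 (ln (q (T \<theta>) y))) \<partial>Xi)
        - enn2ereal (\<integral>\<^sup>+ \<theta>. (if q (T \<theta>) y = 0 then \<infinity> else ennreal (max 0 (- ln (q (T \<theta>) y)))) \<partial>Xi))
     + KL Xi Pr"

end

theory Submission
  imports Defs
begin

lemma young_ln:
  fixes x s :: real assumes "x > 0"
  shows "s + 1 - exp s / x \<le> ln x"
proof -
  have t: "exp s / x > 0" using assms by simp
  have "ln (exp s / x) \<le> exp s / x - 1" by (rule ln_le_minus_one[OF t])
  moreover have "ln (exp s / x) = s - ln x" using assms by (simp add: ln_div)
  ultimately show ?thesis by linarith
qed

lemma hoeff_bern:
  fixes l r :: real assumes "l \<ge> 0" "r \<ge> 0"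
  shows "- l * r + ln (1 + r * (exp l - 1)) \<le> l^2 / 8"
  using Hoeffdings_lemma_aux[OF assms] by simp

lemma pinsker_pos:
  assumes P: "prob_space P" and Q: "prob_space Q" and sPQ: "sets P = sets Q"
    and B: "B \<in> sets Q" and pr: "measure P B \<ge> measure Q B"
  shows "ereal (2 * (measure P B - measure Q B)^2) \<le> KL P Q"
proof (cases "absolutely_continuous Q P")
  case False
  then show ?thesis by (simp add: KL_def)
next
  case ac: True
  interpret P: prob_space P by fact
  interpret Q: prob_space Q by fact
  define f where "f = RN_deriv Q P"
  define g where "g x = enn2real (f x)" for x
  have f_meas[measurable]: "f \<in> borel_measurable Q" unfolding f_def by simp
  have g_meas[measurable]: "g \<in> borel_measurable Q" unfolding g_def by simp
  have Pd: "density Q f = P" unfolding f_def by (rule Q.density_RN_deriv[OF ac sPQ])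
  have mP: "measurable P (borel::real measure) = measurable Q borel" by (rule measurable_cong_sets[OF sPQ refl])
  have g_measP[measurable]: "g \<in> borel_measurable P" using mP by simp
  have f_measP[measurable]: "f \<in> borel_measurable P" by (subst measurable_cong_sets[OF sPQ refl]) simp
  have fin: "AE x in Q. f x \<noteq> \<infinity>" unfolding f_def
    by (rule Q.RN_deriv_finite[OF _ ac sPQ]) (simp add: P.sigma_finite_measure_axioms)
  have fg: "AE x in Q. f x = ennreal (g x)" using fin unfolding g_def
    by eventually_elim (simp add: less_top)
  have AEP: "AE x in P. f x \<noteq> 0 \<and> g x > 0"
  proof -
    have "AE x in density Q f. f x \<noteq> 0 \<and> g x > 0"
      unfolding AE_density[OF f_meas] using fg fin
      by eventually_elim (auto simp: g_def enn2real_positive_iff less_top)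
    thus ?thesis by (simp only: Pd)
  qed
  define p where "p = measure P B"
  define r where "r = measure Q B"
  define l where "l = 4 * (p - r)"
  define Z where "Z = 1 + r * (exp l - 1)"
  have r01: "0 \<le> r" "r \<le> 1" unfolding r_def by auto
  have l0: "l \<ge> 0" using pr by (simp add: l_def p_def r_def)
  have Z0: "Z > 0" unfolding Z_def using r01 l0 by (intro add_pos_nonneg mult_nonneg_nonneg) auto
  define h where "h x = l * indicator B x - ln Z" for x
  define u where "u x = exp (h x) / g x" for x
  have BP: "B \<in> sets P" using B sPQ by simp
  have indQ: "integrable Q (indicator B :: _ \<Rightarrow> real)" using B
    by (intro integrable_real_indicator) (simp_all add: Q.emeasure_finite less_top[symmetric])
  have indP: "integrable P (indicator B :: _ \<Rightarrow> real)" using BP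
    by (intro integrable_real_indicator) (simp_all add: P.emeasure_finite less_top[symmetric])
  have h_meas[measurable]: "h \<in> borel_measurable Q" unfolding h_def using B by simp
  have h_measP[measurable]: "h \<in> borel_measurable P" using mP h_meas by simp
  have u_measP[measurable]: "u \<in> borel_measurable P" unfolding u_def by simp
  have expQ: "(\<integral>\<^sup>+ x. ennreal (exp (h x)) \<partial>Q) = 1"
  proof -
    have e: "exp (h x) = 1 / Z + ((exp l - 1) / Z) * indicator B x" for x
      unfolding h_def using Z0 by (auto simp: exp_diff indicator_def diff_divide_distrib)
    have int: "integrable Q (\<lambda>x. 1 / Z + ((exp l - 1) / Z) * indicator B x)"
      using indQ by (intro Bochner_Integration.integrable_add integrable_mult_right) (auto)
    have "(\<integral>\<^sup>+ x. ennreal (exp (h x)) \<partial>Q) = ennreal (integral\<^sup>L Q (\<lambda>x. 1 / Z + ((exp l - 1) / Z) * indicator B x))"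
      unfolding e by (rule nn_integral_eq_integral[OF int], rule AE_I2, metis e exp_ge_zero)
    also have "integral\<^sup>L Q (\<lambda>x. 1 / Z + ((exp l - 1) / Z) * indicator B x) = 1 / Z + ((exp l - 1) / Z) * r"
      using B indQ by (subst Bochner_Integration.integral_add) (auto simp: r_def Q.prob_space)
    also have "\<dots> = 1" using Z0 by (simp add: Z_def field_simps)
    finally show ?thesis by simp
  qed
  have u_nonneg: "u x \<ge> 0" for x unfolding u_def g_def by simp
  have u_measQ[measurable]: "u \<in> borel_measurable Q" unfolding u_def by simp
  have uP: "(\<integral>\<^sup>+ x. ennreal (u x) \<partial>P) \<le> 1"
  proof -
    have "(\<integral>\<^sup>+ x. ennreal (u x) \<partial>P) = (\<integral>\<^sup>+ x. f x * ennreal (u x) \<partial>Q)"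
      by (subst Pd[symmetric]) (rule nn_integral_density; simp)
    also have "\<dots> \<le> (\<integral>\<^sup>+ x. ennreal (exp (h x)) \<partial>Q)"
    proof (rule nn_integral_mono_AE)
      show "AE x in Q. f x * ennreal (u x) \<le> ennreal (exp (h x))"
        using fg
      proof eventually_elim
        case (elim x)
        have g0: "g x \<ge> 0" unfolding g_def by simp
        have "f x * ennreal (u x) = ennreal (g x * u x)" using elim g0 u_nonneg
          by (simp add: ennreal_mult)
        also have "g x * u x \<le> exp (h x)" using g0 by (cases "g x = 0") (auto simp: u_def)
        finally show ?case by (simp add: ennreal_leI)
      qed
    qed
    also have "\<dots> = 1" by (rule expQ)
    finally show ?thesis .
  qed
  have u_int: "integrable P u"
  proof (rule integrableI_nonneg)
    show "(\<integral>\<^sup>+ x. ennreal (u x) \<partial>P) < \<infinity>" using le_less_trans[OF uP, of \<infinity>] by simp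
  qed (auto simp: u_nonneg)
  have int_u: "integral\<^sup>L P u \<le> 1"
  proof -
    have "integral\<^sup>L P u = enn2real (\<integral>\<^sup>+ x. ennreal (u x) \<partial>P)"
      by (rule integral_eq_nn_integral) (auto simp: u_nonneg)
    also have "\<dots> \<le> enn2real 1" by (rule enn2real_mono[OF uP]) simp
    finally show ?thesis by simp
  qed
  have h_int: "integrable P h" unfolding h_def using indP by auto
  have int_h: "integral\<^sup>L P h = l * p - ln Z" unfolding h_def using indP
    by (subst Bochner_Integration.integral_diff) (use sets.sets_into_space[OF BP] in \<open>auto simp: p_def P.prob_space Int_absorb2\<close>)
  define k where "k x = h x + 1 - u x" for x
  have k_int: "integrable P k" unfolding k_def using h_int u_int by auto
  have k_measP[measurable]: "k \<in> borel_measurable P" unfolding k_def by simp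
  have int_k: "integral\<^sup>L P k \<ge> l * p - ln Z" unfolding k_def using h_int u_int int_u int_h
    by (simp add: Bochner_Integration.integral_diff Bochner_Integration.integral_add P.prob_space)
  have k_le: "AE x in P. k x \<le> ln (g x)" using AEP
    by eventually_elim (simp add: k_def u_def young_ln)
  define a where "a = (\<integral>\<^sup>+ x. ennreal (max 0 (ln (enn2real (f x)))) \<partial>P)"
  define b where "b = (\<integral>\<^sup>+ x. (if f x = 0 then \<infinity> else ennreal (max 0 (- ln (enn2real (f x))))) \<partial>P)"
  have KLab: "KL P Q = enn2ereal a - enn2ereal b"
    unfolding KL_def a_def b_def f_def using sPQ ac by (simp add: Let_def)
  have a_eq: "a = (\<integral>\<^sup>+ x. ennreal (ln (g x)) \<partial>P)"
    unfolding a_def g_def by (intro nn_integral_cong) (simp add: max_def ennreal_neg)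
  have b_eq: "b = (\<integral>\<^sup>+ x. ennreal (- ln (g x)) \<partial>P)"
    unfolding b_def g_def using AEP
    by (intro nn_integral_cong_AE) (auto elim!: eventually_mono simp: max_def ennreal_neg)
  have b_fin: "b < \<infinity>"
  proof -
    have "b \<le> (\<integral>\<^sup>+ x. ennreal (norm (k x)) \<partial>P)"
      unfolding b_eq using k_le
      by (intro nn_integral_mono_AE) (auto elim!: eventually_mono intro!: ennreal_leI)
    also have "\<dots> < \<infinity>" using k_int unfolding integrable_iff_bounded by simp
    finally show ?thesis .
  qed
  have goal_real: "2 * (p - r)^2 \<le> integral\<^sup>L P k"
  proof -
    have "- l * r + ln Z \<le> l^2 / 8" unfolding Z_def by (rule hoeff_bern[OF l0 r01(1)])
    hence "2 * (p - r)^2 \<le> l * p - ln Z" by (simp add: l_def power2_eq_square algebra_simps)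
    thus ?thesis using int_k by linarith
  qed
  show ?thesis
  proof (cases "a = \<infinity>")
    case True
    then show ?thesis using b_fin by (simp add: KLab)
  next
    case False
    have lg_meas[measurable]: "(\<lambda>x. ln (g x)) \<in> borel_measurable P" by simp
    have lg_int: "integrable P (\<lambda>x. ln (g x))"
      unfolding integrable_iff_bounded
    proof (intro conjI lg_meas)
      have "(\<integral>\<^sup>+ x. ennreal (norm (ln (g x))) \<partial>P) = (\<integral>\<^sup>+ x. ennreal (ln (g x)) + ennreal (- ln (g x)) \<partial>P)"
        by (intro nn_integral_cong) (auto simp: ennreal_neg abs_real_def)
      also have "\<dots> = a + b" unfolding a_eq b_eq by (rule nn_integral_add) auto
      also have "\<dots> < \<infinity>" using False b_fin by (simp add: less_top)
      finally show "(\<integral>\<^sup>+ x. ennreal (norm (ln (g x))) \<partial>P) < \<infinity>" .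
    qed
    have "integral\<^sup>L P (\<lambda>x. ln (g x)) = enn2real a - enn2real b"
      unfolding a_eq b_eq by (rule real_lebesgue_integral_def[OF lg_int])
    moreover have "KL P Q = ereal (enn2real a - enn2real b)"
    proof -
      have a1: "ennreal (enn2real a) = a" using False by (simp add: ennreal_enn2real less_top)
      have b1: "ennreal (enn2real b) = b" using b_fin by (simp add: ennreal_enn2real)
      have "enn2ereal (ennreal (enn2real a)) = ereal (enn2real a)" by (rule enn2ereal_ennreal) simp
      hence ea: "enn2ereal a = ereal (enn2real a)" unfolding a1 .
      have "enn2ereal (ennreal (enn2real b)) = ereal (enn2real b)" by (rule enn2ereal_ennreal) simp
      hence eb: "enn2ereal b = ereal (enn2real b)" unfolding b1 .
      show ?thesis unfolding KLab ea eb by simp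
    qed
    moreover have "integral\<^sup>L P k \<le> integral\<^sup>L P (\<lambda>x. ln (g x))"
      by (rule integral_mono_AE[OF k_int lg_int k_le])
    ultimately have "2 * (p - r)^2 \<le> enn2real a - enn2real b" "KL P Q = ereal (enn2real a - enn2real b)"
      using goal_real by linarith+
    thus ?thesis unfolding p_def r_def by simp
  qed
qed
lemma mixture_sets: "sets (mixture Th M w P) = sets Th"
  unfolding mixture_def by (simp add: sets.sigma_sets_eq sets.space_closed)

lemma mixture_space: "space (mixture Th M w P) = space Th"
  by (rule sets_eq_imp_space_eq[OF mixture_sets])

lemma mixture_emeasure:
  assumes PS: "\<And>m. m \<in> M \<Longrightarrow> sets (P m) = sets Th" and A: "A \<in> sets Th"
  shows "emeasure (mixture Th M w P) A = (\<integral>\<^sup>+ m. ennreal (w m) * emeasure (P m) A \<partial>count_space M)"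
  unfolding mixture_def
proof (rule emeasure_measure_of_sigma[OF sets.sigma_algebra_axioms _ _ A])
  show "positive (sets Th) (\<lambda>A. \<integral>\<^sup>+ m. ennreal (w m) * emeasure (P m) A \<partial>count_space M)"
    unfolding positive_def by simp
  show "countably_additive (sets Th) (\<lambda>A. \<integral>\<^sup>+ m. ennreal (w m) * emeasure (P m) A \<partial>count_space M)"
    unfolding countably_additive_def
  proof (intro allI impI)
    fix F :: "nat \<Rightarrow> _" assume F: "range F \<subseteq> sets Th" "disjoint_family F" "\<Union> (range F) \<in> sets Th"
    have "(\<Sum>i. \<integral>\<^sup>+ m. ennreal (w m) * emeasure (P m) (F i) \<partial>count_space M)
        = (\<integral>\<^sup>+ m. (\<Sum>i. ennreal (w m) * emeasure (P m) (F i)) \<partial>count_space M)"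
      by (rule nn_integral_suminf[symmetric]) simp
    also have "\<dots> = (\<integral>\<^sup>+ m. ennreal (w m) * emeasure (P m) (\<Union> (range F)) \<partial>count_space M)"
    proof (rule nn_integral_cong)
      fix m assume "m \<in> space (count_space M)"
      hence "sets (P m) = sets Th" using PS by simp
      hence "range F \<subseteq> sets (P m)" using F(1) by simp
      hence "(\<Sum>i. emeasure (P m) (F i)) = emeasure (P m) (\<Union> (range F))"
        using F(2) by (rule suminf_emeasure)
      thus "(\<Sum>i. ennreal (w m) * emeasure (P m) (F i)) = ennreal (w m) * emeasure (P m) (\<Union> (range F))"
        by (simp only: ennreal_suminf_cmult)
    qed
    finally show "(\<Sum>i. \<integral>\<^sup>+ m. ennreal (w m) * emeasure (P m) (F i) \<partial>count_space M)
        = (\<integral>\<^sup>+ m. ennreal (w m) * emeasure (P m) (\<Union> (range F)) \<partial>count_space M)" .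
  qed
qed

lemma mixture_cell:
  assumes PS: "\<And>m. m \<in> M \<Longrightarrow> prob_space (P m) \<and> sets (P m) = sets Th \<and> emeasure (P m) (Thm m) = 1"
    and disj: "disjoint_family_on Thm M"
    and Thm_sets: "\<And>m. m \<in> M \<Longrightarrow> Thm m \<in> sets Th"
    and k: "k \<in> M" and wk: "w k \<ge> 0"
  shows "emeasure (mixture Th M w P) (Thm k) = ennreal (w k)"
proof -
  have zero: "emeasure (P m) (Thm k) = 0" if m: "m \<in> M" "m \<noteq> k" for m
  proof -
    interpret prob_space "P m" using PS m by blast
    have s: "Thm k \<in> sets (P m)" "Thm m \<in> sets (P m)" using PS Thm_sets k m by auto
    have d: "Thm k \<inter> Thm m = {}" using disj k m unfolding disjoint_family_on_def by blast
    have "emeasure (P m) (Thm m) = 1" using PS m by blast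
    hence pm: "prob (Thm m) = 1" by (simp add: emeasure_eq_measure)
    have "prob (Thm k \<union> Thm m) = prob (Thm k) + prob (Thm m)"
      using s d by (intro finite_measure_Union) auto
    moreover have "prob (Thm k \<union> Thm m) \<le> 1" by simp
    ultimately have "prob (Thm k) = 0" using pm measure_nonneg[of "P m" "Thm k"] by linarith
    thus ?thesis by (simp add: emeasure_eq_measure)
  qed
  have "emeasure (mixture Th M w P) (Thm k) = (\<integral>\<^sup>+ m. ennreal (w m) * emeasure (P m) (Thm k) \<partial>count_space M)"
    by (rule mixture_emeasure[OF _ Thm_sets[OF k]]) (use PS in blast)
  also have "\<dots> = (\<integral>\<^sup>+ m. ennreal (w k) * indicator {k} m \<partial>count_space M)"
  proof (rule nn_integral_cong)
    fix m assume "m \<in> space (count_space M)"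
    hence m: "m \<in> M" by simp
    show "ennreal (w m) * emeasure (P m) (Thm k) = ennreal (w k) * indicator {k} m"
    proof (cases "m = k")
      case True thus ?thesis using PS[OF k] by simp
    next
      case False thus ?thesis using zero[OF m False] by simp
    qed
  qed
  also have "\<dots> = ennreal (w k)" using k by (subst nn_integral_cmult_indicator) auto
  finally show ?thesis .
qed

lemma pinsker_set:
  assumes P: "prob_space P" and Q: "prob_space Q" and sPQ: "sets P = sets Q" and B: "B \<in> sets Q"
  shows "ereal (2 * (measure P B - measure Q B)^2) \<le> KL P Q"
proof (cases "measure P B \<ge> measure Q B")
  case True
  then show ?thesis by (rule pinsker_pos[OF P Q sPQ B])
next
  case False
  interpret P: prob_space P by fact
  interpret Q: prob_space Q by fact
  have sp: "space P = space Q" using sPQ by (rule sets_eq_imp_space_eq)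
  have Bc: "space Q - B \<in> sets Q" using B by auto
  have BP: "B \<in> sets P" using B sPQ by simp
  have e1: "measure P (space Q - B) = 1 - measure P B" using P.prob_compl[OF BP] sp by simp
  have e2: "measure Q (space Q - B) = 1 - measure Q B" using Q.prob_compl[OF B] by simp
  have "ereal (2 * (measure P (space Q - B) - measure Q (space Q - B))^2) \<le> KL P Q"
    by (rule pinsker_pos[OF P Q sPQ Bc]) (use False e1 e2 in simp)
  moreover have "(measure P (space Q - B) - measure Q (space Q - B))^2 = (measure P B - measure Q B)^2"
    unfolding e1 e2 by (simp add: power2_eq_square algebra_simps)
  ultimately show ?thesis by simp
qed

lemma count_space_has_sum:
  fixes w :: "'m \<Rightarrow> real"
  assumes nn: "\<And>m. m \<in> M \<Longrightarrow> w m \<ge> 0" and hs: "(w has_sum s) M"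
  shows "(\<integral>\<^sup>+ m. ennreal (w m) \<partial>count_space M) = ennreal s"
proof -
  have sm: "w summable_on M" using hs by (auto simp: summable_on_def)
  have "(\<lambda>x. norm (w x)) summable_on M"
    using sm by (rule summable_on_cong[THEN iffD1, rotated]) (use nn in auto)
  hence abs: "Infinite_Set_Sum.abs_summable_on w M" using abs_summable_equivalent by blast
  have "(\<integral>\<^sup>+ m. ennreal (w m) \<partial>count_space M) = ennreal (infsetsum w M)"
    by (rule nn_integral_conv_infsetsum[OF abs nn])
  also have "infsetsum w M = infsum w M" by (rule infsetsum_infsum[OF abs])
  also have "infsum w M = s" using hs by (rule infsumI)
  finally show ?thesis .
qed

lemma mixture_prob:
  fixes w :: "'m \<Rightarrow> real"
  assumes nn: "\<And>m. m \<in> M \<Longrightarrow> w m \<ge> 0" and hs: "(w has_sum 1) M"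
    and PS: "\<And>m. m \<in> M \<Longrightarrow> prob_space (P m) \<and> sets (P m) = sets Th"
  shows "prob_space (mixture Th M w P)"
proof (rule prob_spaceI)
  have "emeasure (mixture Th M w P) (space Th) = (\<integral>\<^sup>+ m. ennreal (w m) * emeasure (P m) (space Th) \<partial>count_space M)"
    by (rule mixture_emeasure) (use PS in auto)
  also have "\<dots> = (\<integral>\<^sup>+ m. ennreal (w m) \<partial>count_space M)"
  proof (rule nn_integral_cong)
    fix m assume "m \<in> space (count_space M)"
    hence m: "m \<in> M" by simp
    then interpret prob_space "P m" using PS by blast
    have "space (P m) = space Th" using PS m sets_eq_imp_space_eq by metis
    thus "ennreal (w m) * emeasure (P m) (space Th) = ennreal (w m)" using emeasure_space_1 by simp
  qed
  also have "\<dots> = 1" using count_space_has_sum[OF nn hs] by simp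
  finally show "emeasure (mixture Th M w P) (space (mixture Th M w P)) = 1" by (simp add: mixture_space)
qed

theorem proposition2p2:
  fixes Th :: "'t measure" and Lam :: "'l measure" and mu :: "'y measure"
    and q :: "'l \<Rightarrow> 'y \<Rightarrow> real" and y :: 'y
    and M :: "'m set" and Thm :: "'m \<Rightarrow> 't set" and T :: "'t \<Rightarrow> 'l"
    and \<alpha> :: "'m \<Rightarrow> real" and Pm :: "'m \<Rightarrow> 't measure"
    and V :: "'m \<Rightarrow> 't measure set" and Xh :: "'m \<Rightarrow> 't measure"
    and e :: "'m \<Rightarrow> real" and S :: real and \<gamma> :: "'m \<Rightarrow> real"
  assumes mu_sf: "sigma_finite_measure mu"
    and q_meas: "(\<lambda>(l, z). q l z) \<in> borel_measurable (Lam \<Otimes>\<^sub>M mu)"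
    and q_nonneg: "\<And>l z. l \<in> space Lam \<Longrightarrow> z \<in> space mu \<Longrightarrow> q l z \<ge> 0"
    and q_dens: "\<And>l. l \<in> space Lam \<Longrightarrow> (\<integral>\<^sup>+ z. ennreal (q l z) \<partial>mu) = 1"
    and y_in: "y \<in> space mu"
    and M_count: "countable M"
    and disj: "disjoint_family_on Thm M"
    and Thm_sets: "\<And>m. m \<in> M \<Longrightarrow> Thm m \<in> sets Th"
    and space_Th: "space Th = (\<Union>m\<in>M. Thm m)"
    and T_meas: "T \<in> Th \<rightarrow>\<^sub>M Lam"
    and \<alpha>_nonneg: "\<And>m. m \<in> M \<Longrightarrow> \<alpha> m \<ge> 0"
    and \<alpha>_sum: "(\<alpha> has_sum 1) M"
    and Pm_prob: "\<And>m. m \<in> M \<Longrightarrow> prob_space (Pm m) \<and> sets (Pm m) = sets Th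
                                     \<and> emeasure (Pm m) (Thm m) = 1"
    and V_prob: "\<And>m X. m \<in> M \<Longrightarrow> X \<in> V m \<Longrightarrow>
                   prob_space X \<and> sets X = sets Th \<and> emeasure X (Thm m) = 1"
    and post_norm: "0 < (\<integral>\<^sup>+ \<theta>. ennreal (q (T \<theta>) y) \<partial>mixture Th M \<alpha> Pm)"
                   "(\<integral>\<^sup>+ \<theta>. ennreal (q (T \<theta>) y) \<partial>mixture Th M \<alpha> Pm) < \<infinity>"
    and Xh_in: "\<And>m. m \<in> M \<Longrightarrow> Xh m \<in> V m"
    and Xh_min: "\<And>m X. m \<in> M \<Longrightarrow> X \<in> V m \<Longrightarrow> vb_obj (Xh m) (Pm m) T q y \<le> vb_obj X (Pm m) T q y"
    and e_def: "\<And>m. m \<in> M \<Longrightarrow> vb_obj (Xh m) (Pm m) T q y = ereal (e m)"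
    and S_def: "((\<lambda>m. \<alpha> m * exp (- e m)) has_sum S) M"
    and \<gamma>_def: "\<And>m. m \<in> M \<Longrightarrow> \<gamma> m = \<alpha> m * exp (- e m) / S"
  shows "ereal ((\<Sum>\<^sub>\<infinity> m\<in>M. \<bar>\<gamma> m - measure (posterior (mixture Th M \<alpha> Pm) T q y) (Thm m)\<bar>) ^ 2)
           \<le> 2 * KL (mixture Th M \<gamma> Xh) (posterior (mixture Th M \<alpha> Pm) T q y)"
proof -
  define Pa where "Pa = mixture Th M \<alpha> Pm"
  define Q where "Q = posterior Pa T q y"
  define P where "P = mixture Th M \<gamma> Xh"
  have Pa_sets: "sets Pa = sets Th" unfolding Pa_def by (rule mixture_sets)
  have P_sets: "sets P = sets Th" unfolding P_def by (rule mixture_sets)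
  have Pa_prob: "prob_space Pa" unfolding Pa_def
  proof (rule mixture_prob[OF \<alpha>_nonneg \<alpha>_sum])
    fix m assume "m \<in> M"
    thus "prob_space (Pm m) \<and> sets (Pm m) = sets Th" using Pm_prob by blast
  qed
  have S_pos: "S > 0"
  proof -
    have "\<exists>k\<in>M. \<alpha> k \<noteq> 0"
    proof (rule ccontr)
      assume "\<not> (\<exists>k\<in>M. \<alpha> k \<noteq> 0)"
      hence "(\<alpha> has_sum 0) M" by (intro has_sum_0) auto
      with \<alpha>_sum show False using has_sum_unique by fastforce
    qed
    then obtain k where k: "k \<in> M" "\<alpha> k \<noteq> 0" by blast
    have "\<alpha> k * exp (- e k) \<le> S"
    proof (rule has_sum_mono_neutral[OF _ S_def])
      show "((\<lambda>m. \<alpha> m * exp (- e m)) has_sum (\<alpha> k * exp (- e k))) {k}"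
        using has_sum_finite[of "{k}" "\<lambda>m. \<alpha> m * exp (- e m)"] by simp
    qed (use k \<alpha>_nonneg in auto)
    moreover have "\<alpha> k * exp (- e k) > 0" using k \<alpha>_nonneg[of k] by simp
    ultimately show ?thesis by simp
  qed
  have \<gamma>_nonneg: "\<And>m. m \<in> M \<Longrightarrow> \<gamma> m \<ge> 0" using \<gamma>_def \<alpha>_nonneg S_pos by simp
  have \<gamma>_sum: "(\<gamma> has_sum 1) M"
  proof -
    have "((\<lambda>m. \<alpha> m * exp (- e m) * (1 / S)) has_sum (S * (1 / S))) M"
      by (rule has_sum_cmult_left[OF S_def])
    hence "((\<lambda>m. \<alpha> m * exp (- e m) * (1 / S)) has_sum 1) M" using S_pos by simp
    thus ?thesis by (rule has_sum_cong[THEN iffD1, rotated]) (simp add: \<gamma>_def)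
  qed
  have P_prob: "prob_space P" unfolding P_def
  proof (rule mixture_prob[OF \<gamma>_nonneg \<gamma>_sum])
    fix m assume "m \<in> M"
    thus "prob_space (Xh m) \<and> sets (Xh m) = sets Th" using V_prob Xh_in by blast
  qed
  define Z where "Z = (\<integral>\<^sup>+ \<theta>. ennreal (q (T \<theta>) y) \<partial>Pa)"
  have qT_meas: "(\<lambda>\<theta>. q (T \<theta>) y) \<in> borel_measurable Th"
  proof -
    have "(\<lambda>\<theta>. (T \<theta>, y)) \<in> Th \<rightarrow>\<^sub>M Lam \<Otimes>\<^sub>M mu"
      using T_meas y_in by (intro measurable_Pair) auto
    from measurable_comp[OF this q_meas] show ?thesis by (simp add: comp_def)
  qed
  have qT_measPa: "(\<lambda>\<theta>. q (T \<theta>) y) \<in> borel_measurable Pa"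
    using measurable_cong_sets[OF Pa_sets refl, where 'b=real] qT_meas by simp
  have Q_eq: "Q = density Pa (\<lambda>\<theta>. ennreal (q (T \<theta>) y) / Z)"
    unfolding Q_def posterior_def Z_def ..
  have Q_sets: "sets Q = sets Th" by (simp add: Q_eq Pa_sets)
  have Q_prob: "prob_space Q"
  proof (rule prob_spaceI)
    have sp: "space Q = space Pa" by (simp add: Q_eq)
    have "emeasure Q (space Q) = (\<integral>\<^sup>+ \<theta>. ennreal (q (T \<theta>) y) / Z * indicator (space Pa) \<theta> \<partial>Pa)"
      unfolding sp unfolding Q_eq using qT_measPa by (intro emeasure_density) auto
    also have "\<dots> = (\<integral>\<^sup>+ \<theta>. ennreal (q (T \<theta>) y) / Z \<partial>Pa)"
      by (intro nn_integral_cong) simp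
    also have "\<dots> = Z / Z" unfolding Z_def using qT_measPa by (intro nn_integral_divide) auto
    also have "\<dots> = 1" using post_norm unfolding Z_def Pa_def by simp
    finally show "emeasure Q (space Q) = 1" .
  qed
  have P_cell: "measure P (Thm m) = \<gamma> m" if m: "m \<in> M" for m
  proof -
    have "emeasure P (Thm m) = ennreal (\<gamma> m)" unfolding P_def
      by (rule mixture_cell[where P=Xh and Thm=Thm and M=M and Th=Th and w=\<gamma> and k=m, OF _ disj Thm_sets m \<gamma>_nonneg[OF m]]) (use V_prob Xh_in in blast)
    thus ?thesis using \<gamma>_nonneg[OF m] by (simp add: measure_def)
  qed
  have KLb: "ereal (2 * (measure P B - measure Q B)^2) \<le> KL P Q" if "B \<in> sets Th" for B
    by (rule pinsker_set[OF P_prob Q_prob]) (simp_all add: P_sets Q_sets that)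
  define d where "d = (\<lambda>m. \<bar>\<gamma> m - measure Q (Thm m)\<bar>)"
  have "ereal ((infsum d M)^2) \<le> 2 * KL P Q"
  proof (cases "KL P Q = \<infinity>")
    case True thus ?thesis by simp
  next
    case False
    have K0: "ereal 0 \<le> KL P Q" using KLb[of "{}"] by simp
    then obtain \<kappa> where \<kappa>: "KL P Q = ereal \<kappa>" using False by (cases "KL P Q") auto
    have \<kappa>0: "\<kappa> \<ge> 0" using K0 \<kappa> by simp
    have sq: "(measure P B - measure Q B)^2 \<le> \<kappa> / 2" if "B \<in> sets Th" for B
      using KLb[OF that] \<kappa> by simp
    interpret P: prob_space P by (rule P_prob)
    interpret Q: prob_space Q by (rule Q_prob)
    have fin: "sum d F \<le> sqrt (2 * \<kappa>)" if F: "finite F" "F \<subseteq> M" for F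
    proof -
      define F1 where "F1 = {m\<in>F. \<gamma> m \<ge> measure Q (Thm m)}"
      define F2 where "F2 = F - F1"
      have F1F: "F1 \<subseteq> F" "finite F1" "F2 \<subseteq> F" "finite F2" using F unfolding F1_def F2_def by auto
      have split: "sum d F = sum d F1 + sum d F2"
        unfolding F2_def using F1F F by (simp add: sum.subset_diff)
      have U: "measure R (\<Union>m\<in>G. Thm m) = (\<Sum>m\<in>G. measure R (Thm m))"
        if G: "G \<subseteq> F" and R: "prob_space R" "sets R = sets Th" for G R
      proof -
        interpret R: prob_space R by (rule R(1))
        show ?thesis
        proof (rule R.finite_measure_finite_Union)
          show "finite G" using G F finite_subset by blast
          show "Thm ` G \<subseteq> sets R" using G F Thm_sets R(2) by auto
          show "disjoint_family_on Thm G" using disj G F disjoint_family_on_mono by blast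
        qed
      qed
      define U1 where "U1 = (\<Union>m\<in>F1. Thm m)"
      define U2 where "U2 = (\<Union>m\<in>F2. Thm m)"
      have U1s: "U1 \<in> sets Th" unfolding U1_def using F1F F Thm_sets by (intro sets.finite_UN) auto
      have U2s: "U2 \<in> sets Th" unfolding U2_def using F1F F Thm_sets by (intro sets.finite_UN) auto
      have d1: "sum d F1 = measure P U1 - measure Q U1"
      proof -
        have "sum d F1 = (\<Sum>m\<in>F1. measure P (Thm m)) - (\<Sum>m\<in>F1. measure Q (Thm m))"
          unfolding sum_subtractf[symmetric] using F1F F P_cell
          by (intro sum.cong) (auto simp: d_def F1_def)
        thus ?thesis unfolding U1_def using U[OF F1F(1) P_prob P_sets] U[OF F1F(1) Q_prob Q_sets] by simp
      qed
      have d2: "sum d F2 = - (measure P U2 - measure Q U2)"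
      proof -
        have "sum d F2 = (\<Sum>m\<in>F2. measure Q (Thm m)) - (\<Sum>m\<in>F2. measure P (Thm m))"
          unfolding sum_subtractf[symmetric] using F1F F P_cell
          by (intro sum.cong) (auto simp: d_def F1_def F2_def)
        thus ?thesis unfolding U2_def using U[OF F1F(3) P_prob P_sets] U[OF F1F(3) Q_prob Q_sets] by simp
      qed
      define x where "x = measure P U1 - measure Q U1"
      define z where "z = measure P U2 - measure Q U2"
      have x2: "x^2 \<le> \<kappa> / 2" unfolding x_def by (rule sq[OF U1s])
      have z2: "z^2 \<le> \<kappa> / 2" unfolding z_def by (rule sq[OF U2s])
      have "(x - z)^2 \<le> 2 * \<kappa>"
      proof -
        have "(x - z)^2 \<le> (x - z)^2 + (x + z)^2" by simp
        also have "\<dots> = 2 * x^2 + 2 * z^2" by (simp add: power2_eq_square algebra_simps)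
        finally show ?thesis using x2 z2 by linarith
      qed
      hence "x - z \<le> sqrt (2 * \<kappa>)" by (rule real_le_rsqrt)
      thus ?thesis using split d1 d2 unfolding x_def z_def by simp
    qed
    have d_nn: "\<And>m. m \<in> M \<Longrightarrow> d m \<ge> 0" by (simp add: d_def)
    have summ: "d summable_on M"
      by (rule nonneg_bounded_partial_sums_imp_summable_on[where C="sqrt (2 * \<kappa>)", OF d_nn])
         (auto intro!: eventually_finite_subsets_at_top_weakI fin)
    have "infsum d M \<le> sqrt (2 * \<kappa>)" by (rule infsum_le_finite_sums[OF summ fin])
    moreover have "infsum d M \<ge> 0" by (rule infsum_nonneg) (simp add: d_def)
    ultimately have "(infsum d M)^2 \<le> (sqrt (2 * \<kappa>))^2" by (intro power_mono) auto
    also have "\<dots> = 2 * \<kappa>" using \<kappa>0 by simp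
    finally show ?thesis using \<kappa> by simp
  qed
  thus ?thesis unfolding d_def P_def Q_def Pa_def .
qed

end
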